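(* Let $G$ be an interval graph and let $[C_1,\ldots,C_t]$ be a consecutive clique arrangement of $G$. For a vertex $v$ let $r(v)=\max\{i : v\in C_i\}$, and order the vertices of $C_1$ by nondecreasing $r(v)$ (ties broken arbitrarily). Then there exists a triangle packing of $G$ of maximum cardinality in which every vertex of $C_1$ is covered by some triangle, except possibly the first vertex, or the first two vertices, of $C_1$ in this ordering; that is, the set of uncovered vertices of $C_1$ is an initial segment of the ordering of length at most $2$.
   Context: A graph is an interval graph if it is the intersection graph of a finite collection of intervals on the real line. A consecutive clique arrangement of a graph $G$ is a linear ordering $[C_1,\ldots,C_t]$ of all maximal cliques of $G$ such that for each vertex $v$, the cliques containing $v$ are consecutive in the ordering. A triangle packing is a collection of pairwise vertex-disjoint triangles; a vertex is covered if it lies in one of these triangles. *)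

theory Defs
  imports Complex_Main
begin

definition simple_graph :: "'a set \<Rightarrow> ('a \<Rightarrow> 'a \<Rightarrow> bool) \<Rightarrow> bool" where
  "simple_graph V E \<longleftrightarrow> finite V \<and> (\<forall>u v. E u v \<longrightarrow> u \<in> V \<and> v \<in> V)
     \<and> (\<forall>u v. E u v \<longrightarrow> E v u) \<and> (\<forall>v. \<not> E v v)"

definition interval_graph :: "'a set \<Rightarrow> ('a \<Rightarrow> 'a \<Rightarrow> bool) \<Rightarrow> bool" where
  "interval_graph V E \<longleftrightarrow> simple_graph V E \<and>
     (\<exists>l r :: 'a \<Rightarrow> real. (\<forall>v\<in>V. l v \<le> r v) \<and>
        (\<forall>u\<in>V. \<forall>v\<in>V. u \<noteq> v \<longrightarrow> (E u v \<longleftrightarrow> {l u..r u} \<inter> {l v..r v} \<noteq> {})))"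

definition is_clique :: "'a set \<Rightarrow> ('a \<Rightarrow> 'a \<Rightarrow> bool) \<Rightarrow> 'a set \<Rightarrow> bool" where
  "is_clique V E K \<longleftrightarrow> K \<subseteq> V \<and> (\<forall>u\<in>K. \<forall>v\<in>K. u \<noteq> v \<longrightarrow> E u v)"

definition maximal_clique :: "'a set \<Rightarrow> ('a \<Rightarrow> 'a \<Rightarrow> bool) \<Rightarrow> 'a set \<Rightarrow> bool" where
  "maximal_clique V E K \<longleftrightarrow> is_clique V E K \<and> (\<forall>K'. is_clique V E K' \<and> K \<subseteq> K' \<longrightarrow> K' = K)"

text \<open>Consecutive clique arrangement: a list [C_1,...,C_t] (indices 0..t-1 here)
listing every maximal clique exactly once such that for each vertex the cliques
containing it are consecutive.\<close>

definition consecutive_clique_arrangement ::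
    "'a set \<Rightarrow> ('a \<Rightarrow> 'a \<Rightarrow> bool) \<Rightarrow> 'a set list \<Rightarrow> bool" where
  "consecutive_clique_arrangement V E Cs \<longleftrightarrow>
     distinct Cs \<and> set Cs = {K. maximal_clique V E K} \<and>
     (\<forall>v \<in> V. \<forall>i j k. i \<le> j \<and> j \<le> k \<and> k < length Cs \<and> v \<in> Cs ! i \<and> v \<in> Cs ! k
        \<longrightarrow> v \<in> Cs ! j)"

definition last_clique :: "'a set list \<Rightarrow> 'a \<Rightarrow> nat" where
  "last_clique Cs v = Max {i. i < length Cs \<and> v \<in> Cs ! i}"

definition is_triangle :: "'a set \<Rightarrow> ('a \<Rightarrow> 'a \<Rightarrow> bool) \<Rightarrow> 'a set \<Rightarrow> bool" where
  "is_triangle V E T \<longleftrightarrow> card T = 3 \<and> is_clique V E T"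

definition triangle_packing :: "'a set \<Rightarrow> ('a \<Rightarrow> 'a \<Rightarrow> bool) \<Rightarrow> 'a set set \<Rightarrow> bool" where
  "triangle_packing V E P \<longleftrightarrow> (\<forall>T\<in>P. is_triangle V E T) \<and>
     (\<forall>T\<in>P. \<forall>T'\<in>P. T \<noteq> T' \<longrightarrow> T \<inter> T' = {})"

definition max_triangle_packing :: "'a set \<Rightarrow> ('a \<Rightarrow> 'a \<Rightarrow> bool) \<Rightarrow> 'a set set \<Rightarrow> bool" where
  "max_triangle_packing V E P \<longleftrightarrow> triangle_packing V E P \<and>
     (\<forall>Q. triangle_packing V E Q \<longrightarrow> card Q \<le> card P)"

definition covered :: "'a set set \<Rightarrow> 'a set" where
  "covered P = \<Union>P"

end

theory Submission
  imports Defs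
begin

lemma clique_ext:
  assumes sg: "simple_graph V E" and K0: "is_clique V E K0"
  shows "\<exists>K. maximal_clique V E K \<and> K0 \<subseteq> K"
proof -
  have fin: "finite V" using sg by (simp add: simple_graph_def)
  have "\<exists>K. (is_clique V E K \<and> K0 \<subseteq> K) \<and> (\<forall>y. (is_clique V E y \<and> K0 \<subseteq> y) \<longrightarrow> card y \<le> card K)"
    apply (rule Lattices_Big.ex_has_greatest_nat[where k=K0 and b="Suc (card V)"])
    using K0 apply simp
    using fin by (auto simp: is_clique_def intro: card_mono le_imp_less_Suc)
  then obtain K where K: "is_clique V E K" "K0 \<subseteq> K"
    and mx: "\<And>y. is_clique V E y \<Longrightarrow> K0 \<subseteq> y \<Longrightarrow> card y \<le> card K" by blast
  have "maximal_clique V E K"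
    unfolding maximal_clique_def
  proof (intro conjI allI impI)
    fix K' assume a: "is_clique V E K' \<and> K \<subseteq> K'"
    hence "finite K'" using fin by (meson finite_subset is_clique_def)
    moreover have "card K' \<le> card K" using mx a K by blast
    ultimately show "K' = K" using a by (metis card_subset_eq card_mono le_antisym)
  qed (use K in auto)
  thus ?thesis using K by blast
qed

lemma nbr_nested:
  assumes sg: "simple_graph V E" and cca: "consecutive_clique_arrangement V E Cs"
    and ne: "Cs \<noteq> []"
    and u: "u \<in> Cs ! 0" and v: "v \<in> Cs ! 0"
    and r: "last_clique Cs u \<le> last_clique Cs v"
    and euw: "E u w"
  shows "w = v \<or> E v w"
proof -
  have sym: "E w u" using sg euw by (simp add: simple_graph_def)
  have uw: "u \<in> V" "w \<in> V" using sg euw by (auto simp: simple_graph_def)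
  have "is_clique V E {u, w}" using uw euw sym by (auto simp: is_clique_def)
  then obtain K where K: "maximal_clique V E K" "{u,w} \<subseteq> K" using clique_ext sg by blast
  hence "K \<in> set Cs" using cca by (simp add: consecutive_clique_arrangement_def)
  then obtain i where i: "i < length Cs" "Cs ! i = K" by (auto simp: in_set_conv_nth)
  have C0: "Cs ! 0 \<in> set Cs" using ne by simp
  hence "maximal_clique V E (Cs ! 0)" using cca by (simp add: consecutive_clique_arrangement_def)
  hence vV: "v \<in> V" using v by (auto simp: maximal_clique_def is_clique_def)
  have finI: "\<And>x. finite {i. i < length Cs \<and> x \<in> Cs ! i}" by simp
  have "i \<le> last_clique Cs u" unfolding last_clique_def
    using i K by (intro Max_ge) auto
  hence ir: "i \<le> last_clique Cs v" using r by simp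
  have "last_clique Cs v \<in> {i. i < length Cs \<and> v \<in> Cs ! i}" unfolding last_clique_def
    using ne v by (intro Max_in) auto
  hence "last_clique Cs v < length Cs" "v \<in> Cs ! last_clique Cs v" by auto
  hence "v \<in> K" using cca vV ir i v unfolding consecutive_clique_arrangement_def
    by (metis le0)
  thus ?thesis using K(1,2) by (auto simp: maximal_clique_def is_clique_def)
qed

lemma pack_fin:
  assumes "simple_graph V E" "triangle_packing V E P"
  shows "P \<subseteq> Pow V" "finite P"
proof -
  show "P \<subseteq> Pow V" using assms(2)
    by (auto simp: triangle_packing_def is_triangle_def is_clique_def)
  thus "finite P" using assms(1) by (meson finite_Pow_iff finite_subset simple_graph_def)
qed

lemma swap:
  assumes sg: "simple_graph V E" and tp: "triangle_packing V E P"
    and T: "T \<in> P" and a: "a \<in> T" and b: "b \<notin> \<Union>P" "b \<in> V"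
    and nb: "\<And>w. E a w \<Longrightarrow> w = b \<or> E b w"
  shows "triangle_packing V E (insert (insert b (T-{a})) (P-{T}))"
    "card (insert (insert b (T-{a})) (P-{T})) = card P"
    "\<Union>(insert (insert b (T-{a})) (P-{T})) = insert b (\<Union>P - {a})"
proof -
  have fin: "finite P" using pack_fin(2)[OF sg tp] .
  have Tt: "is_triangle V E T" using tp T by (simp add: triangle_packing_def)
  have disj: "\<And>T'. T' \<in> P \<Longrightarrow> T' \<noteq> T \<Longrightarrow> T' \<inter> T = {}" using tp T by (simp add: triangle_packing_def)
  have bT: "b \<notin> T" using b T by blast
  have finT: "finite T" using Tt unfolding is_triangle_def by (intro card_ge_0_finite) simp
  have c3: "card T = 3" using Tt by (simp add: is_triangle_def)
  have "card (T-{a}) = 2" using c3 a finT by (simp add: card_Diff_singleton)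
  hence cT: "card (insert b (T-{a})) = 3" using bT finT by simp
  have symE: "\<And>x y. E x y \<Longrightarrow> E y x" using sg by (simp add: simple_graph_def)
  have clq: "is_clique V E (insert b (T-{a}))"
    unfolding is_clique_def
  proof (intro conjI ballI impI)
    have "T \<subseteq> V" using Tt by (simp add: is_triangle_def is_clique_def)
    thus "insert b (T - {a}) \<subseteq> V" using b by blast
  next
    fix u v assume u: "u \<in> insert b (T - {a})" and v: "v \<in> insert b (T - {a})" and uv: "u \<noteq> v"
    have TT: "\<And>x y. x \<in> T \<Longrightarrow> y \<in> T \<Longrightarrow> x \<noteq> y \<Longrightarrow> E x y" using Tt by (auto simp: is_triangle_def is_clique_def)
    show "E u v"
    proof (cases "u = b")
      case True
      hence "v \<in> T" "v \<noteq> a" "v \<noteq> b" using v uv by auto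
      thus ?thesis using TT[OF a \<open>v \<in> T\<close>] nb True by metis
    next
      case False
      hence uT: "u \<in> T" "u \<noteq> a" using u by auto
      show ?thesis
      proof (cases "v = b")
        case True
        have "v \<noteq> u" using uv by blast
        hence "E a u" using TT[OF a uT(1)] uT by metis
        thus ?thesis using nb symE True uT bT by metis
      next
        case False hence "v \<in> T" using v by blast
        thus ?thesis using uT uv TT by blast
      qed
    qed
  qed
  have nin: "insert b (T-{a}) \<notin> P - {T}" using b by blast
  show "triangle_packing V E (insert (insert b (T-{a})) (P-{T}))"
    unfolding triangle_packing_def
  proof (intro conjI ballI impI)
    fix X assume "X \<in> insert (insert b (T-{a})) (P-{T})"
    thus "is_triangle V E X" using tp clq cT unfolding triangle_packing_def is_triangle_def by blast
  next
    fix X Y assume X: "X \<in> insert (insert b (T-{a})) (P-{T})" and Y: "Y \<in> insert (insert b (T-{a})) (P-{T})" and "X \<noteq> Y"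
    have nw: "\<And>Z. Z \<in> P - {T} \<Longrightarrow> insert b (T-{a}) \<inter> Z = {}"
    proof -
      fix Z assume Z: "Z \<in> P - {T}"
      hence "Z \<inter> T = {}" "b \<notin> Z" using disj b by auto
      thus "insert b (T-{a}) \<inter> Z = {}" by blast
    qed
    have old: "\<And>Z W. Z \<in> P - {T} \<Longrightarrow> W \<in> P - {T} \<Longrightarrow> Z \<noteq> W \<Longrightarrow> Z \<inter> W = {}"
      using tp by (auto simp: triangle_packing_def)
    show "X \<inter> Y = {}"
    proof -
      from X Y \<open>X \<noteq> Y\<close> consider "X = insert b (T-{a})" "Y \<in> P - {T}"
        | "Y = insert b (T-{a})" "X \<in> P - {T}" | "X \<in> P - {T}" "Y \<in> P - {T}" by blast
      thus ?thesis
      proof cases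
        case 1 thus ?thesis using nw by blast
      next
        case 2 thus ?thesis using nw by blast
      next
        case 3 thus ?thesis using old \<open>X \<noteq> Y\<close> by blast
      qed
    qed
  qed
  show "card (insert (insert b (T-{a})) (P-{T})) = card P"
    using fin nin T by (simp add: card_Diff_singleton) (metis Suc_pred card_gt_0_iff empty_iff)
  show "\<Union>(insert (insert b (T-{a})) (P-{T})) = insert b (\<Union>P - {a})"
    using disj a T by blast
qed


lemma down_eq:
  fixes I :: "nat set"
  assumes "finite I" and d: "\<And>i j. j \<in> I \<Longrightarrow> i < j \<Longrightarrow> i \<in> I"
  shows "I = {0..<card I}"
proof (cases "I = {}")
  case True thus ?thesis by simp
next
  case False
  have a: "I \<subseteq> {0..<Suc (Max I)}" using assms(1) by (auto simp: less_Suc_eq_le)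
  have b: "{0..<Suc (Max I)} \<subseteq> I"
  proof
    fix i assume "i \<in> {0..<Suc (Max I)}"
    hence "i \<le> Max I" by simp
    moreover have "Max I \<in> I" using assms(1) False by simp
    ultimately show "i \<in> I" using d by (cases "i = Max I") auto
  qed
  have "I = {0..<Suc (Max I)}" using a b by blast
  thus ?thesis by (metis card_atLeastLessThan diff_zero)
qed

theorem mainTheorem3:
  fixes V :: "'a set" and E :: "'a \<Rightarrow> 'a \<Rightarrow> bool"
    and Cs :: "'a set list" and ord :: "'a list"
  assumes "interval_graph V E"
    and "consecutive_clique_arrangement V E Cs"
    and "distinct ord" and "set ord = Cs ! 0"
    and "sorted (map (last_clique Cs) ord)"
  shows "\<exists>P. max_triangle_packing V E P \<and>
           (\<exists>k \<le> 2. Cs ! 0 - covered P = set (take k ord))"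
proof -
  have sg: "simple_graph V E" using assms(1) by (simp add: interval_graph_def)
  note cca = assms(2)
  have finV: "finite V" using sg by (simp add: simple_graph_def)
  have "is_clique V E {}" by (simp add: is_clique_def)
  then obtain K0 where "maximal_clique V E K0" using clique_ext[OF sg] by blast
  hence "K0 \<in> set Cs" using cca by (simp add: consecutive_clique_arrangement_def)
  hence ne: "Cs \<noteq> []" by auto
  hence "Cs ! 0 \<in> set Cs" by simp
  hence C0: "maximal_clique V E (Cs ! 0)" using cca by (simp add: consecutive_clique_arrangement_def)
  hence CV: "Cs ! 0 \<subseteq> V" and Cclq: "\<And>u v. u \<in> Cs ! 0 \<Longrightarrow> v \<in> Cs ! 0 \<Longrightarrow> u \<noteq> v \<Longrightarrow> E u v"
    by (auto simp: maximal_clique_def is_clique_def)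
  define m where "m = length ord"
  have ordC: "\<And>i. i < m \<Longrightarrow> ord ! i \<in> Cs ! 0" using assms(4) m_def nth_mem by blast
  have nest: "\<And>i j w. i \<le> j \<Longrightarrow> j < m \<Longrightarrow> E (ord ! i) w \<Longrightarrow> w = ord ! j \<or> E (ord ! j) w"
  proof -
    fix i j w assume ij: "i \<le> j" "j < m" and e: "E (ord ! i) w"
    have "last_clique Cs (ord ! i) \<le> last_clique Cs (ord ! j)"
      using sorted_nth_mono[OF assms(5), of i j] ij m_def by simp
    thus "w = ord ! j \<or> E (ord ! j) w"
      using nbr_nested[OF sg cca ne ordC ordC _ e] ij by simp
  qed
  define f where "f P = (\<Sum>i \<in> {i. i < m \<and> ord ! i \<in> \<Union>P}. i)" for P :: "'a set set"
  have fb: "\<And>P. f P < Suc (\<Sum>i<m. i)"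
  proof -
    fix P
    have "f P \<le> (\<Sum>i<m. i)" unfolding f_def by (rule sum_mono2) auto
    thus "f P < Suc (\<Sum>i<m. i)" by simp
  qed
  have "triangle_packing V E {}" by (simp add: triangle_packing_def)
  have "\<exists>P. triangle_packing V E P \<and> (\<forall>Q. triangle_packing V E Q \<longrightarrow> card Q \<le> card P)"
  proof (rule Lattices_Big.ex_has_greatest_nat[where k="{}" and b="Suc (card (Pow V))"])
    show "triangle_packing V E {}" by (simp add: triangle_packing_def)
    show "\<forall>y. triangle_packing V E y \<longrightarrow> card y < Suc (card (Pow V))"
      using pack_fin(1)[OF sg] finV by (meson card_mono finite_Pow_iff le_imp_less_Suc)
  qed
  then obtain P0 where "max_triangle_packing V E P0" by (auto simp: max_triangle_packing_def)
  have "\<exists>P. max_triangle_packing V E P \<and> (\<forall>Q. max_triangle_packing V E Q \<longrightarrow> f Q \<le> f P)"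
    by (rule Lattices_Big.ex_has_greatest_nat[where k=P0 and b="Suc (\<Sum>i<m. i)"])
       (use \<open>max_triangle_packing V E P0\<close> fb in auto)
  then obtain P where P: "max_triangle_packing V E P"
    and Pf: "\<And>Q. max_triangle_packing V E Q \<Longrightarrow> f Q \<le> f P" by blast
  have tp: "triangle_packing V E P" and Pmax: "\<And>Q. triangle_packing V E Q \<Longrightarrow> card Q \<le> card P"
    using P by (auto simp: max_triangle_packing_def)
  have finP: "finite P" using pack_fin(2)[OF sg tp] .
  define I where "I = {i. i < m \<and> ord ! i \<notin> \<Union>P}"
  have finI: "finite I" unfolding I_def by simp
  have down: "\<And>i j. j \<in> I \<Longrightarrow> i < j \<Longrightarrow> i \<in> I"
  proof (rule ccontr)
    fix i j assume jI: "j \<in> I" and ij: "i < j" and iI: "i \<notin> I"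
    have jm: "j < m" and jP: "ord ! j \<notin> \<Union>P" using jI by (auto simp: I_def)
    have im: "i < m" using ij jm by simp
    have iP: "ord ! i \<in> \<Union>P" using iI im by (auto simp: I_def)
    then obtain T where T: "T \<in> P" "ord ! i \<in> T" by blast
    have bV: "ord ! j \<in> V" using ordC[OF jm] CV by blast
    define P' where "P' = insert (insert (ord ! j) (T-{ord ! i})) (P-{T})"
    have sw: "triangle_packing V E P'" "card P' = card P" "\<Union>P' = insert (ord ! j) (\<Union>P - {ord ! i})"
      unfolding P'_def using swap[OF sg tp T jP bV] nest[of i j] ij jm by auto
    have mP': "max_triangle_packing V E P'" using sw(1,2) Pmax by (simp add: max_triangle_packing_def)
    define S where "S = {k. k < m \<and> ord ! k \<in> \<Union>P}"
    have dist: "\<And>k l. k < m \<Longrightarrow> l < m \<Longrightarrow> ord ! k = ord ! l \<longleftrightarrow> k = l"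
      using assms(3) m_def nth_eq_iff_index_eq by blast
    have S': "{k. k < m \<and> ord ! k \<in> \<Union>P'} = insert j (S - {i})"
      unfolding sw(3) S_def using dist im jm by auto
    have iS: "i \<in> S" using im iP by (simp add: S_def)
    have finS: "finite S" by (simp add: S_def)
    have jS: "j \<notin> S - {i}" using jP by (simp add: S_def)
    have "f P' = j + sum id (S - {i})" unfolding f_def S' using finS jS by simp
    moreover have "f P = i + sum id (S - {i})" unfolding f_def S_def[symmetric]
      using sum.remove[OF finS iS, of id] by simp
    ultimately have "f P < f P'" using ij by simp
    thus False using Pf[OF mP'] by simp
  qed
  have cardI: "card I \<le> 2"
  proof (rule ccontr)
    assume "\<not> card I \<le> 2"
    then obtain J where J: "J \<subseteq> I" "card J = 3"
      by (metis obtain_subset_with_card_n not_le Suc_leI numeral_3_eq_3 numeral_2_eq_2)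
    define T where "T = (!) ord ` J"
    have Jm: "J \<subseteq> {..<m}" using J I_def by auto
    have "inj_on ((!) ord) J" using Jm assms(3) m_def
      unfolding inj_on_def by (metis lessThan_iff nth_eq_iff_index_eq subsetD)
    hence cT: "card T = 3" using J T_def card_image by metis
    have TC: "T \<subseteq> Cs ! 0" using Jm ordC T_def by auto
    have TP: "T \<inter> \<Union>P = {}" using J T_def I_def by auto
    have Ttri: "is_triangle V E T" using cT TC CV Cclq unfolding is_triangle_def is_clique_def by blast
    have "T \<noteq> {}" using cT by auto
    hence TnP: "T \<notin> P" using TP by auto
    have "triangle_packing V E (insert T P)" using tp Ttri TP
      unfolding triangle_packing_def by auto
    hence "card (insert T P) \<le> card P" using Pmax by blast
    thus False using TnP finP by simp
  qed
  have Ieq: "I = {0..<card I}" using down_eq[OF finI] down by blast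
  have Im: "card I \<le> length ord"
  proof -
    have "I \<subseteq> {..<m}" by (auto simp: I_def)
    hence "card I \<le> card {..<m}" by (intro card_mono) auto
    thus ?thesis by (simp add: m_def)
  qed
  have "Cs ! 0 - covered P = (!) ord ` I"
    unfolding covered_def I_def assms(4)[symmetric] m_def by (auto simp: in_set_conv_nth)
  also have "\<dots> = set (take (card I) ord)" using nth_image[OF Im] Ieq by metis
  finally show ?thesis using P cardI by blast
qed

end
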